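(* Let $b,t$ be positive integers and $x_0,\dots,x_{t-1}$ indeterminates. Let $A=(A_0\ A_1\ \cdots\ A_{t-1})$ be the $tb\times tb$ matrix over $\mathbb C[x_0,\dots,x_{t-1}]$ where $A_s$ is the $tb\times b$ matrix whose rows are indexed by $i=(t-1)b-1,(t-1)b-2,\dots,-b$ (top to bottom) and whose columns are indexed by $k=1,\dots,b$, with $(i,k)$ entry $\alpha^k_i(x_s)=\sum_{j=1}^k\binom{x_s}{i+j}\binom{-x_s}{k-j}$. Then $$\det A=\prod_{0\le i<j\le t-1}\ \prod_{k=-b+1}^{b-1}\left(\frac{x_i-x_j+k}{b(j-i)+k}\right)^{b-|k|}.$$
   Context: $\binom{x}{n}=x(x-1)\cdots(x-n+1)/n!$ for integers $n\ge0$ and $\binom xn=0$ for $n<0$. *)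

theory Defs
  imports Complex_Main "Jordan_Normal_Form.Determinant"
begin

definition ibinom :: "complex \<Rightarrow> int \<Rightarrow> complex" where
  "ibinom x n = (if n < 0 then 0 else x gchoose (nat n))"

definition alpha :: "nat \<Rightarrow> int \<Rightarrow> complex \<Rightarrow> complex" where
  "alpha k i x = (\<Sum>j = 1..k. ibinom x (i + int j) * ibinom (- x) (int k - int j))"

text \<open>The tb x tb matrix A = (A_0 ... A_{t-1}), evaluated at x_0..x_{t-1}.
  Row r (0-based) has index i = (t-1)b - 1 - r; column c belongs to block
  s = c div b with k = c mod b + 1.\<close>
definition matA :: "nat \<Rightarrow> nat \<Rightarrow> (nat \<Rightarrow> complex) \<Rightarrow> complex mat" where
  "matA b t x = mat (t * b) (t * b)
     (\<lambda>(r, c). alpha (c mod b + 1) (int ((t - 1) * b) - 1 - int r) (x (c div b)))"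

end

theory Submission
  imports Defs "HOL-Computational_Algebra.Formal_Power_Series"
begin


lemma gchoose_Suc_rel:
  "of_nat (Suc k) * ((a::complex) gchoose Suc k) = (a - of_nat k) * (a gchoose k)"
proof -
  have "fact (Suc k) * (a gchoose Suc k) = (\<Prod>i = 0..<Suc k. a - of_nat i)"
    by (rule gbinomial_mult_fact)
  also have "\<dots> = (a - of_nat k) * (fact k * (a gchoose k))"
    by (simp add: gbinomial_mult_fact)
  finally have "fact k * (of_nat (Suc k) * (a gchoose Suc k)) = fact k * ((a - of_nat k) * (a gchoose k))"
    by (simp add: algebra_simps)
  then show ?thesis by simp
qed

lemma det_scale_rows_cols:
  fixes M :: "complex mat"
  assumes "M \<in> carrier_mat n n"
  shows "det (mat n n (\<lambda>(i,j). a i * b j * M $$ (i,j))) =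
    (\<Prod>i<n. a i) * (\<Prod>j<n. b j) * det M"
proof -
  have "det (mat n n (\<lambda>(i,j). a i * b j * M $$ (i,j))) =
     (\<Sum>p\<in>{p. p permutes {0..<n}}. signof p * (\<Prod>i=0..<n. a i * b (p i) * M $$ (i, p i)))"
    by (subst det_def'[of _ n]) auto
  also have "\<dots> = (\<Sum>p\<in>{p. p permutes {0..<n}}. (\<Prod>i<n. a i) * (\<Prod>j<n. b j) * (signof p * (\<Prod>i=0..<n. M $$ (i, p i))))"
  proof (rule sum.cong[OF refl])
    fix p assume "p \<in> {p. p permutes {0..<n}}"
    then have p: "p permutes {0..<n}" by simp
    have "(\<Prod>i=0..<n. b (p i)) = (\<Prod>j=0..<n. b j)"
      using prod.permute[OF p, of b] by (simp add: comp_def)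
    then show "signof p * (\<Prod>i=0..<n. a i * b (p i) * M $$ (i, p i)) =
        (\<Prod>i<n. a i) * (\<Prod>j<n. b j) * (signof p * (\<Prod>i=0..<n. M $$ (i, p i)))"
      by (simp add: prod.distrib atLeast0LessThan)
  qed
  also have "\<dots> = (\<Prod>i<n. a i) * (\<Prod>j<n. b j) * det M"
    by (subst det_def'[OF assms]) (simp add: sum_distrib_left)
  finally show ?thesis .
qed

lemma one_plus_of_nat_nz[simp]: "(1 + of_nat k :: complex) \<noteq> 0"
  by (metis of_nat_Suc of_nat_eq_0_iff nat.distinct(1))

lemma prod_inv_Suc: "(\<Prod>i<n. 1 / of_nat (Suc i) :: complex) = 1 / fact n"
proof (induction n)
  case (Suc n)
  have "(\<Prod>i<Suc n. 1 / of_nat (Suc i) :: complex) = 1 / fact n * (1 / of_nat (Suc n))"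
    by (simp only: prod.lessThan_Suc Suc.IH)
  also have "\<dots> = 1 / (of_nat (Suc n) * fact n)" by (simp del: of_nat_Suc)
  also have "\<dots> = 1 / fact (Suc n)" by (simp only: fact_Suc)
  finally show ?case .
qed simp

definition Bv :: "nat \<Rightarrow> (nat \<Rightarrow> complex) \<Rightarrow> complex mat" where
  "Bv n y = mat n n (\<lambda>(r,c). y c gchoose r)"

definition Vp :: "nat \<Rightarrow> (nat \<Rightarrow> complex) \<Rightarrow> complex" where
  "Vp n y = (\<Prod>c'<n. \<Prod>c<c'. (y c' - y c))"

lemma det_Bv: "det (Bv n y) = Vp n y / (\<Prod>m<n. fact m)"
proof (induction n)
  case 0
  then show ?case by (simp add: Bv_def Vp_def)
next
  case (Suc n)
  define m where "m = Suc n"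
  define L where "L = mat m m (\<lambda>(i,j). if i = j then 1 else if Suc j = i then - (y n - of_nat j) / of_nat i else (0::complex))"
  define E where "E = mat m m (\<lambda>(i,c). if i = 0 then 1 else (y c - y n) / of_nat i * (y c gchoose (i - 1)))"
  have Lc: "L \<in> carrier_mat m m" by (simp add: L_def)
  have Bc: "Bv m y \<in> carrier_mat m m" by (simp add: Bv_def)
  have detL: "det L = 1"
    by (subst det_lower_triangular[OF _ Lc]) (auto simp: L_def prod_list_diag_prod)
  have LB: "L * Bv m y = E"
  proof (rule eq_matI)
    fix i c assume i: "i < dim_row E" and c: "c < dim_col E"
    then have i: "i < m" and c: "c < m" by (auto simp: E_def)
    have "(L * Bv m y) $$ (i,c) = (\<Sum>k = 0..<m. L $$ (i,k) * (y c gchoose k))"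
      using i c by (simp add: L_def Bv_def scalar_prod_def)
    also have "\<dots> = E $$ (i,c)"
    proof (cases i)
      case 0
      have "(\<Sum>k = 0..<m. L $$ (i,k) * (y c gchoose k)) = (\<Sum>k = 0..<m. if k = 0 then 1 else 0)"
        by (rule sum.cong) (auto simp: L_def 0 m_def)
      then show ?thesis using 0 c by (simp add: E_def m_def)
    next
      case (Suc i')
      have "(\<Sum>k = 0..<m. L $$ (i,k) * (y c gchoose k)) =
            (\<Sum>k = 0..<m. (if k = i then (y c gchoose i) else 0) +
               (if k = i' then - (y n - of_nat i') / of_nat i * (y c gchoose i') else 0))"
        by (rule sum.cong) (use i in \<open>auto simp: L_def Suc m_def\<close>)
      also have "\<dots> = (y c gchoose i) - (y n - of_nat i') / of_nat i * (y c gchoose i')"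
        using i Suc by (simp add: sum.distrib) (simp add: minus_divide_left algebra_simps)
      also have "\<dots> = (y c - y n) / of_nat i * (y c gchoose i')"
      proof -
        have "of_nat i * (y c gchoose i) = (y c - of_nat i') * (y c gchoose i')"
          using gchoose_Suc_rel[of i' "y c"] Suc by simp
        moreover have nz: "(of_nat i :: complex) \<noteq> 0" by (metis Suc nat.distinct(1) of_nat_eq_0_iff)
        ultimately have "(y c gchoose i) = (y c - of_nat i') / of_nat i * (y c gchoose i')"
          by (simp add: field_simps)
        then show ?thesis using nz by (simp add: field_simps)
      qed
      finally show ?thesis using Suc c i by (simp add: E_def)
    qed
    finally show "(L * Bv m y) $$ (i,c) = E $$ (i,c)" .
  qed (auto simp: L_def E_def Bv_def)
  have "det (Bv m y) = det E"
    using det_mult[OF Lc Bc] detL LB by simp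
  also have "det E = (\<Sum>i<m. E $$ (i,n) * cofactor E i n)"
    by (rule laplace_expansion_column) (auto simp: E_def m_def)
  also have "\<dots> = E $$ (0,n) * cofactor E 0 n"
  proof -
    have "(\<Sum>i<m. E $$ (i,n) * cofactor E i n) = (\<Sum>i<m. if i = 0 then E $$ (0,n) * cofactor E 0 n else 0)"
      by (rule sum.cong) (auto simp: E_def m_def)
    then show ?thesis by (simp add: m_def)
  qed
  also have "\<dots> = (-1)^n * det (mat_delete E 0 n)"
    by (simp add: cofactor_def E_def m_def)
  also have "mat_delete E 0 n = mat n n (\<lambda>(i,j). (1 / of_nat (Suc i)) * (y j - y n) * Bv n y $$ (i,j))"
    by (rule eq_matI) (auto simp: mat_delete_def E_def Bv_def m_def)
  also have "det \<dots> = (\<Prod>i<n. 1 / of_nat (Suc i)) * (\<Prod>j<n. y j - y n) * det (Bv n y)"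
    by (rule det_scale_rows_cols) (simp add: Bv_def)
  also have "(\<Prod>i<n. 1 / of_nat (Suc i)) = (1 / fact n :: complex)"
    by (rule prod_inv_Suc)
  also have "(-1)^n * (1 / fact n * (\<Prod>j<n. y j - y n) * det (Bv n y)) =
      (\<Prod>j<n. y n - y j) * Vp n y / (fact n * (\<Prod>m<n. fact m))"
  proof -
    have "(\<Prod>j<n. y n - y j) = (\<Prod>j<n. (-1) * (y j - y n))" by simp
    also have "\<dots> = (-1)^n * (\<Prod>j<n. y j - y n)" by (subst prod.distrib) simp
    finally show ?thesis using Suc.IH by simp
  qed
  also have "\<dots> = Vp (Suc n) y / (\<Prod>m<Suc n. fact m)"
    by (simp add: Vp_def mult.commute)
  finally show ?case by (simp add: m_def)
qed


lemma prod_shift_ivl: "(\<Prod>c\<in>{n..<n+m::nat}. f c) = (\<Prod>a<m. f (n+a))"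
  by (induction m) (auto simp: prod.lessThan_Suc)

lemma prod_lessThan_add: "(\<Prod>c<n+m::nat. f c) = (\<Prod>c<n. f c) * (\<Prod>a<m. f (n+a))"
proof -
  have "(\<Prod>c<n+m. f c) = (\<Prod>c\<in>{0..<n+m}. f c)" by (simp add: lessThan_atLeast0)
  also have "\<dots> = (\<Prod>c\<in>{0..<n}. f c) * (\<Prod>c\<in>{n..<n+m}. f c)"
    by (simp add: prod.atLeastLessThan_concat)
  finally show ?thesis by (simp add: prod_shift_ivl lessThan_atLeast0)
qed

lemma prod_blocks: "(\<Prod>c<t*b::nat. f c) = (\<Prod>s<t. \<Prod>a<b. f (s*b+a))"
proof (induction t)
  case (Suc t)
  have "Suc t * b = t*b + b" by simp
  then have "(\<Prod>c<Suc t*b. f c) = (\<Prod>c<t*b. f c) * (\<Prod>a<b. f (t*b+a))"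
    by (simp only: prod_lessThan_add)
  then show ?case using Suc.IH by simp
qed simp

lemma Vp_add: "Vp (n+m) y = Vp n y * (\<Prod>a<m. \<Prod>c<n+a. (y (n+a) - y c))"
  unfolding Vp_def by (rule prod_lessThan_add)

definition yv :: "nat \<Rightarrow> (nat \<Rightarrow> complex) \<Rightarrow> nat \<Rightarrow> complex" where
  "yv b x c = x (c div b) + of_nat (b - 1 - c mod b)"

definition Wb :: "nat \<Rightarrow> complex" where
  "Wb b = (\<Prod>a'<b. \<Prod>a<a'. (of_nat (b - 1 - a') - of_nat (b - 1 - a)))"

definition G :: "nat \<Rightarrow> complex \<Rightarrow> complex" where
  "G b u = (\<Prod>a'<b. \<Prod>a<b. (u + of_nat (b - 1 - a') - of_nat (b - 1 - a)))"

definition PG :: "nat \<Rightarrow> nat \<Rightarrow> (nat \<Rightarrow> complex) \<Rightarrow> complex" where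
  "PG b t x = (\<Prod>s'<t. \<Prod>s<s'. G b (x s' - x s))"

lemma yv_block: "b > 0 \<Longrightarrow> a < b \<Longrightarrow> yv b x (s*b+a) = x s + of_nat (b - 1 - a)"
  by (simp add: yv_def)

lemma Vp_yv: assumes "b > 0" shows "Vp (t*b) (yv b x) = Wb b ^ t * PG b t x"
proof (induction t)
  case 0
  then show ?case by (simp add: Vp_def PG_def)
next
  case (Suc t)
  have "Vp (Suc t * b) (yv b x) = Vp (t*b + b) (yv b x)" by (simp add: add.commute)
  also have "\<dots> = Vp (t*b) (yv b x) *
     (\<Prod>a'<b. (\<Prod>c<t*b. (yv b x (t*b+a') - yv b x c)) * (\<Prod>a<a'. (yv b x (t*b+a') - yv b x (t*b+a))))"
    by (simp add: Vp_add prod_lessThan_add)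
  also have "(\<Prod>a'<b. (\<Prod>c<t*b. (yv b x (t*b+a') - yv b x c)) * (\<Prod>a<a'. (yv b x (t*b+a') - yv b x (t*b+a))))
      = (\<Prod>s<t. G b (x t - x s)) * Wb b"
  proof -
    have 1: "(\<Prod>a'<b. \<Prod>c<t*b. (yv b x (t*b+a') - yv b x c)) = (\<Prod>s<t. G b (x t - x s))"
    proof -
      have "(\<Prod>a'<b. \<Prod>c<t*b. (yv b x (t*b+a') - yv b x c)) =
            (\<Prod>a'<b. \<Prod>s<t. \<Prod>a<b. (yv b x (t*b+a') - yv b x (s*b+a)))"
        by (simp only: prod_blocks)
      also have "\<dots> = (\<Prod>a'<b. \<Prod>s<t. \<Prod>a<b. (x t - x s + of_nat (b - 1 - a') - of_nat (b - 1 - a)))"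
        apply (rule prod.cong[OF refl])+
        apply (subst yv_block[OF assms], simp)+
        apply (simp add: algebra_simps)
        done
      also have "\<dots> = (\<Prod>s<t. \<Prod>a'<b. \<Prod>a<b. (x t - x s + of_nat (b - 1 - a') - of_nat (b - 1 - a)))"
        by (rule prod.swap)
      finally show ?thesis by (simp add: G_def)
    qed
    have 2: "(\<Prod>a'<b. \<Prod>a<a'. (yv b x (t*b+a') - yv b x (t*b+a))) = Wb b"
      unfolding Wb_def
      by (rule prod.cong[OF refl])+ (simp add: yv_block assms)
    show ?thesis using 1 2 by (simp add: prod.distrib)
  qed
  finally show ?case using Suc.IH by (simp add: PG_def)
qed



lemma prod_neg_part: "(\<Prod>a'<b. (v::complex) + of_int (int a' - int b)) = (\<Prod>k\<in>{-int b..<0}. v + of_int k)"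
  by (rule prod.reindex_bij_witness[where i="\<lambda>k. nat (k + int b)" and j="\<lambda>a'. int a' - int b"]) auto

lemma prod_pos_part: "(\<Prod>a<Suc b. (v::complex) + of_int (int b - int a)) = (\<Prod>k\<in>{0..int b}. v + of_int k)"
  by (rule prod.reindex_bij_witness[where i="\<lambda>k. nat (int b - k)" and j="\<lambda>a. int b - int a"]) auto

lemma prod_sym_range: "(\<Prod>k\<in>{-int b..int b}. (v::complex) + of_int k) =
   (\<Prod>k\<in>{-int b..<0}. v + of_int k) * (\<Prod>k\<in>{0..int b}. v + of_int k)"
proof -
  have "{-int b..int b} = {-int b..<0} \<union> {0..int b}" by auto
  then have "(\<Prod>k\<in>{-int b..int b}. (v::complex) + of_int k) = (\<Prod>k\<in>{-int b..<0} \<union> {0..int b}. v + of_int k)"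
    by simp
  also have "\<dots> = (\<Prod>k\<in>{-int b..<0}. v + of_int k) * (\<Prod>k\<in>{0..int b}. v + of_int k)"
    by (rule prod.union_disjoint) auto
  finally show ?thesis .
qed

lemma H_lemma: "(\<Prod>a'<b. \<Prod>a<b. (v::complex) + of_int (int a' - int a)) =
   (\<Prod>k\<in>{-int b+1..int b - 1}. (v + of_int k) ^ nat (int b - \<bar>k\<bar>))"
proof (induction b)
  case 0
  then show ?case by simp
next
  case (Suc b)
  let ?f = "\<lambda>a' a. (v::complex) + of_int (int a' - int a)"
  have eq1: "(\<Prod>a'<Suc b. \<Prod>a<Suc b. ?f a' a) =
      (\<Prod>a'<b. \<Prod>a<b. ?f a' a) * ((\<Prod>a'<b. ?f a' b) * (\<Prod>a<Suc b. ?f b a))"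
    by (simp add: prod.distrib)
  have eq1b: "(\<Prod>a'<b. ?f a' b) * (\<Prod>a<Suc b. ?f b a) = (\<Prod>k\<in>{-int b..int b}. v + of_int k)"
    by (simp only: prod_neg_part prod_pos_part prod_sym_range)
  have eq2: "(\<Prod>k\<in>{-int b+1..int b - 1}. (v + of_int k) ^ nat (int b - \<bar>k\<bar>)) =
      (\<Prod>k\<in>{-int b..int b}. (v + of_int k) ^ nat (int b - \<bar>k\<bar>))"
    by (rule prod.mono_neutral_left) auto
  have eq3: "(\<Prod>k\<in>{-int b..int b}. (v + of_int k) ^ nat (int b - \<bar>k\<bar>)) * (\<Prod>k\<in>{-int b..int b}. v + of_int k) =
      (\<Prod>k\<in>{-int b..int b}. (v + of_int k) ^ nat (int (Suc b) - \<bar>k\<bar>))"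
  proof -
    have "(\<Prod>k\<in>{-int b..int b}. (v + of_int k) ^ nat (int (Suc b) - \<bar>k\<bar>)) = (\<Prod>k\<in>{-int b..int b}. (v + of_int k) ^ nat (int b - \<bar>k\<bar>) * (v + of_int k))"
    proof (rule prod.cong[OF refl])
      fix k assume "k \<in> {-int b..int b}"
      then have "nat (int (Suc b) - \<bar>k\<bar>) = Suc (nat (int b - \<bar>k\<bar>))" by auto
      then show "(v + of_int k) ^ nat (int (Suc b) - \<bar>k\<bar>) = (v + of_int k) ^ nat (int b - \<bar>k\<bar>) * (v + of_int k)"
        by (simp only: power_Suc mult.commute)
    qed
    then show ?thesis by (simp add: prod.distrib)
  qed
  have eq4: "{-int (Suc b)+1..int (Suc b) - 1} = {-int b..int b}" by simp
  show ?case unfolding eq4 eq1 eq1b Suc.IH eq2 eq3 ..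
qed



lemma sum_shift_ivl: "(\<Sum>c\<in>{n..<n+m::nat}. f c) = (\<Sum>a<m. f (n+a))"
  by (induction m) (simp_all add: add_ac)

lemma sum_lessThan_add: "(\<Sum>c<n+m::nat. f c) = (\<Sum>c<n. f c) + (\<Sum>a<m. f (n+a))"
proof -
  have "(\<Sum>c<n+m. f c) = (\<Sum>c\<in>{0..<n+m}. f c)" by (simp add: lessThan_atLeast0)
  also have "\<dots> = (\<Sum>c\<in>{0..<n}. f c) + (\<Sum>c\<in>{n..<n+m}. f c)"
    by (simp add: sum.atLeastLessThan_concat)
  finally show ?thesis by (simp add: sum_shift_ivl lessThan_atLeast0)
qed

lemma sum_blocks: "(\<Sum>c<t*b::nat. f c) = (\<Sum>s<t. \<Sum>a<b. f (s*b+a))"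
proof (induction t)
  case (Suc t)
  have "Suc t * b = t*b + b" by simp
  then have "(\<Sum>c<Suc t*b. f c) = (\<Sum>c<t*b. f c) + (\<Sum>a<b. f (t*b+a))"
    by (simp only: sum_lessThan_add)
  then show ?case using Suc.IH by simp
qed simp

lemma sum_block_select:
  fixes b s t :: nat
  assumes "b > 0" "s < t"
  shows "(\<Sum>c\<in>{0..<t*b}. (if c div b = s then h (c mod b) else (0::complex))) = (\<Sum>a<b. h a)"
proof -
  have "(\<Sum>c\<in>{0..<t*b}. (if c div b = s then h (c mod b) else (0::complex))) =
     (\<Sum>s'<t. \<Sum>a<b. (if (s'*b+a) div b = s then h ((s'*b+a) mod b) else 0))"
    by (simp only: sum_blocks atLeast0LessThan)
  also have "\<dots> = (\<Sum>s'<t. if s' = s then (\<Sum>a<b. h a) else 0)"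
    by (rule sum.cong[OF refl]) (auto simp: assms)
  also have "\<dots> = (\<Sum>a<b. h a)" using assms by simp
  finally show ?thesis .
qed

definition Mm :: "nat \<Rightarrow> nat \<Rightarrow> (nat \<Rightarrow> complex) \<Rightarrow> complex mat" where
  "Mm b t x = mat (t*b) (t*b) (\<lambda>(r,c). ibinom (x (c div b)) (int ((t-1)*b) - int r + int (c mod b)))"

definition Pm :: "nat \<Rightarrow> nat \<Rightarrow> (nat \<Rightarrow> complex) \<Rightarrow> complex mat" where
  "Pm b t x = mat (t*b) (t*b) (\<lambda>(c',c). if c' div b = c div b \<and> c' mod b \<le> c mod b
      then ibinom (- x (c div b)) (int (c mod b) - int (c' mod b)) else 0)"

definition Qm :: "nat \<Rightarrow> nat \<Rightarrow> complex mat" where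
  "Qm b t = mat (t*b) (t*b) (\<lambda>(c',c). if c' div b = c div b
      then of_nat ((b - 1 - c mod b) choose (b - 1 - c' mod b)) else 0)"

definition Brev :: "nat \<Rightarrow> (nat \<Rightarrow> complex) \<Rightarrow> complex mat" where
  "Brev n y = mat n n (\<lambda>(r,c). y c gchoose (n - 1 - r))"

lemma div_mod_le: assumes "(i::nat) div b = j div b" "i mod b \<le> j mod b" shows "i \<le> j"
proof -
  have "i = (i div b) * b + i mod b" by simp
  also have "\<dots> \<le> (j div b) * b + j mod b" by (simp only: assms(1)) (rule add_left_mono[OF assms(2)])
  also have "\<dots> = j" by simp
  finally show ?thesis .
qed

lemma det_Pm: "det (Pm b t x) = 1"
proof -
  have "det (Pm b t x) = prod_list (diag_mat (Pm b t x))"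
  proof (rule det_upper_triangular[where n="t*b"])
    show "upper_triangular (Pm b t x)"
      unfolding upper_triangular_def
    proof (intro allI impI)
      fix i j assume "i < dim_row (Pm b t x)" "j < i"
      then show "Pm b t x $$ (i,j) = 0"
        using div_mod_le[of i b j] by (auto simp: Pm_def)
    qed
  qed (simp add: Pm_def)
  also have "\<dots> = 1" by (simp add: prod_list_diag_prod Pm_def ibinom_def)
  finally show ?thesis .
qed

lemma det_Qm: "det (Qm b t) = 1"
proof -
  have "det (Qm b t) = prod_list (diag_mat (Qm b t))"
  proof (rule det_lower_triangular)
    fix i j assume ij: "i < j" "j < t*b"
    show "Qm b t $$ (i,j) = 0"
    proof (cases "i div b = j div b")
      case True
      then have "\<not> j mod b \<le> i mod b" using div_mod_le[of j b i] ij by auto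
      moreover have "b > 0" using ij by (cases b) auto
      ultimately have "b - 1 - j mod b < b - 1 - i mod b"
        using mod_less_divisor[of b j] mod_less_divisor[of b i] by linarith
      then show ?thesis using ij True by (simp add: Qm_def)
    qed (use ij in \<open>simp add: Qm_def\<close>)
  qed (simp add: Qm_def)
  also have "\<dots> = 1" by (simp add: prod_list_diag_prod Qm_def)
  finally show ?thesis .
qed



lemma vand:
  assumes "A0 < (b::nat)"
  shows "(\<Sum>l<b. ibinom z (int Nn - int l) * of_nat (A0 choose l)) = (z + of_nat A0) gchoose Nn"
proof -
  let ?S = "{0..min A0 Nn}"
  have "(\<Sum>l<b. ibinom z (int Nn - int l) * of_nat (A0 choose l)) =
        (\<Sum>l\<in>?S. ibinom z (int Nn - int l) * of_nat (A0 choose l))"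
    by (rule sum.mono_neutral_right) (use assms in \<open>auto simp: ibinom_def\<close>)
  also have "\<dots> = (\<Sum>l\<in>?S. (of_nat A0 gchoose l) * (z gchoose (Nn - l)))"
    by (rule sum.cong[OF refl]) (auto simp: ibinom_def binomial_gbinomial nat_diff_distrib)
  also have "\<dots> = (\<Sum>l\<in>{0..Nn}. (of_nat A0 gchoose l) * (z gchoose (Nn - l)))"
    by (rule sum.mono_neutral_left) (auto simp: binomial_gbinomial[symmetric])
  also have "\<dots> = (of_nat A0 + z) gchoose Nn" by (rule gbinomial_Vandermonde)
  finally show ?thesis by (simp add: add.commute)
qed

lemma A_eq:
  assumes b: "b > 0" and t: "t > 0"
  shows "matA b t x = Mm b t x * Pm b t x"
proof (rule eq_matI)
  fix r c assume r: "r < dim_row (Mm b t x * Pm b t x)" and c: "c < dim_col (Mm b t x * Pm b t x)"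
  then have r: "r < t*b" and c: "c < t*b" by (auto simp: Mm_def Pm_def)
  define s where "s = c div b"
  define kk where "kk = c mod b"
  have s: "s < t" using c b by (simp add: s_def less_mult_imp_div_less)
  have kk: "kk < b" using b by (simp add: kk_def)
  define g where "g n' = ibinom (x s) (int ((t-1)*b) - int r + int n') * ibinom (- x s) (int kk - int n')" for n'
  have "(Mm b t x * Pm b t x) $$ (r,c) =
        (\<Sum>c'\<in>{0..<t*b}. Mm b t x $$ (r,c') * Pm b t x $$ (c',c))"
    using r c by (simp add: Mm_def Pm_def scalar_prod_def)
  also have "\<dots> = (\<Sum>c'\<in>{0..<t*b}. if c' div b = s then (if c' mod b \<le> kk then g (c' mod b) else 0) else 0)"
    by (rule sum.cong[OF refl]) (use r c in \<open>auto simp: Mm_def Pm_def g_def s_def kk_def\<close>)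
  also have "\<dots> = (\<Sum>n'<b. if n' \<le> kk then g n' else 0)"
    by (rule sum_block_select[OF b s])
  also have "\<dots> = (\<Sum>n'\<in>{n'\<in>{..<b}. n' \<le> kk}. g n')"
    by (subst sum.inter_filter) auto
  also have "{n'\<in>{..<b}. n' \<le> kk} = {0..kk}" using kk by auto
  also have "(\<Sum>n'\<in>{0..kk}. g n') = alpha (kk + 1) (int ((t - 1) * b) - 1 - int r) (x s)"
  proof -
    have e: "{1..kk+1} = {Suc 0..Suc kk}" by simp
    show ?thesis unfolding alpha_def
      by (simp only: e sum.shift_bounds_cl_Suc_ivl) (rule sum.cong, simp_all add: g_def algebra_simps)
  qed
  also have "\<dots> = matA b t x $$ (r,c)"
    using r c by (simp add: matA_def s_def kk_def)
  finally show "matA b t x $$ (r,c) = (Mm b t x * Pm b t x) $$ (r,c)" by simp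
qed (auto simp: matA_def Mm_def Pm_def)

lemma B_eq:
  assumes b: "b > 0" and t: "t > 0"
  shows "Brev (t*b) (yv b x) = Mm b t x * Qm b t"
proof (rule eq_matI)
  fix r c assume r: "r < dim_row (Mm b t x * Qm b t)" and c: "c < dim_col (Mm b t x * Qm b t)"
  then have r: "r < t*b" and c: "c < t*b" by (auto simp: Mm_def Qm_def)
  define s where "s = c div b"
  define kk where "kk = c mod b"
  have s: "s < t" using c b by (simp add: s_def less_mult_imp_div_less)
  have kk: "kk < b" using b by (simp add: kk_def)
  define g where "g n' = ibinom (x s) (int ((t-1)*b) - int r + int n') * of_nat ((b - 1 - kk) choose (b - 1 - n'))" for n'
  have "(Mm b t x * Qm b t) $$ (r,c) =
        (\<Sum>c'\<in>{0..<t*b}. Mm b t x $$ (r,c') * Qm b t $$ (c',c))"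
    using r c by (simp add: Mm_def Qm_def scalar_prod_def)
  also have "\<dots> = (\<Sum>c'\<in>{0..<t*b}. if c' div b = s then g (c' mod b) else 0)"
    by (rule sum.cong[OF refl]) (use r c in \<open>auto simp: Mm_def Qm_def g_def s_def kk_def\<close>)
  also have "\<dots> = (\<Sum>n'<b. g n')"
    by (rule sum_block_select[OF b s])
  also have "\<dots> = (\<Sum>l<b. ibinom (x s) (int (t*b - 1 - r) - int l) * of_nat ((b - 1 - kk) choose l))"
  proof (rule sum.reindex_bij_witness[where i="\<lambda>l. b - 1 - l" and j="\<lambda>n'. b - 1 - n'"])
    fix l assume l: "l \<in> {..<b}"
    have "int ((t-1)*b) - int r + int l = int (t*b - 1 - r) - int (b - 1 - l)"
    proof -
      have "(t-1)*b = t*b - b" by (simp add: diff_mult_distrib)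
      moreover have "b \<le> t*b" using t by simp
      ultimately show ?thesis using r l by (simp add: of_nat_diff)
    qed
    then show "ibinom (x s) (int (t*b - 1 - r) - int (b - 1 - l)) * of_nat ((b - 1 - kk) choose (b - 1 - l)) = g l"
      unfolding g_def by (simp only:)
  qed auto
  also have "\<dots> = (x s + of_nat (b - 1 - kk)) gchoose (t*b - 1 - r)"
    by (rule vand) (use kk b in auto)
  also have "\<dots> = Brev (t*b) (yv b x) $$ (r,c)"
    using r c by (simp add: Brev_def yv_def s_def kk_def)
  finally show "Brev (t*b) (yv b x) $$ (r,c) = (Mm b t x * Qm b t) $$ (r,c)" by simp
qed (auto simp: Brev_def Mm_def Qm_def)



lemma det_A_Brev:
  assumes b: "b > 0" and t: "t > 0"
  shows "det (matA b t x) = det (Brev (t*b) (yv b x))"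
proof -
  have Mc: "Mm b t x \<in> carrier_mat (t*b) (t*b)" by (simp add: Mm_def)
  have Pc: "Pm b t x \<in> carrier_mat (t*b) (t*b)" by (simp add: Pm_def)
  have Qc: "Qm b t \<in> carrier_mat (t*b) (t*b)" by (simp add: Qm_def)
  show ?thesis
    using A_eq[OF b t, of x] B_eq[OF b t, of x] det_mult[OF Mc Pc] det_mult[OF Mc Qc] det_Pm det_Qm
    by simp
qed

definition Jm :: "nat \<Rightarrow> complex mat" where
  "Jm n = mat n n (\<lambda>(r,k). if k = n - 1 - r then 1 else 0)"

lemma det_Brev: "det (Brev n y) = det (Jm n) * (Vp n y / (\<Prod>m<n. fact m))"
proof -
  have "Brev n y = Jm n * Bv n y"
  proof (rule eq_matI)
    fix r c assume "r < dim_row (Jm n * Bv n y)" "c < dim_col (Jm n * Bv n y)"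
    then have r: "r < n" and c: "c < n" by (auto simp: Jm_def Bv_def)
    have "(Jm n * Bv n y) $$ (r,c) = (\<Sum>k\<in>{0..<n}. (if k = n - 1 - r then 1 else 0) * (y c gchoose k))"
      using r c by (simp add: Jm_def Bv_def scalar_prod_def)
    also have "\<dots> = (\<Sum>k\<in>{0..<n}. if k = n - 1 - r then y c gchoose k else 0)"
      by (rule sum.cong) auto
    also have "\<dots> = y c gchoose (n - 1 - r)"
      using r by (subst sum.delta) auto
    finally show "Brev n y $$ (r,c) = (Jm n * Bv n y) $$ (r,c)" using r c by (simp add: Brev_def)
  qed (auto simp: Brev_def Jm_def Bv_def)
  then show ?thesis
    using det_mult[of "Jm n" n "Bv n y"] det_Bv[of n y] by (simp add: Jm_def Bv_def)
qed

lemma ar: assumes "m < (b::nat)" "q < t" shows "b * (t - 1 - q) + (b - 1 - m) = t*b - 1 - (q*b + m)"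
proof -
  obtain d where d: "t = Suc (q + d)" using assms(2) less_iff_Suc_add by auto
  have "t - 1 - q = d" using d by simp
  moreover have "t*b - 1 - (q*b + m) = d*b + (b - 1 - m)"
    using assms(1) d by (simp add: algebra_simps)
  ultimately show ?thesis by (simp add: mult.commute)
qed

definition x0 :: "nat \<Rightarrow> nat \<Rightarrow> nat \<Rightarrow> complex" where
  "x0 b t s = of_nat (b * (t - 1 - s))"

lemma det_Brev_x0:
  assumes b: "b > 0" and t: "t > 0"
  shows "det (Brev (t*b) (yv b (x0 b t))) = 1"
proof -
  have yv0: "yv b (x0 b t) c = of_nat (t*b - 1 - c)" if c: "c < t*b" for c
  proof -
    have "c div b < t" using c b by (simp add: less_mult_imp_div_less)
    have "b * (t - 1 - c div b) + (b - 1 - c mod b) = t*b - 1 - (c div b * b + c mod b)"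
      by (rule ar) (use b c in \<open>auto simp: less_mult_imp_div_less\<close>)
    then have "b * (t - 1 - c div b) + (b - 1 - c mod b) = t*b - 1 - c" by simp
    then show ?thesis unfolding yv_def x0_def by (metis of_nat_add)
  qed
  have "det (Brev (t*b) (yv b (x0 b t))) = prod_list (diag_mat (Brev (t*b) (yv b (x0 b t))))"
  proof (rule det_lower_triangular[where n="t*b"])
    fix i j assume ij: "i < j" "j < t*b"
    have "Brev (t*b) (yv b (x0 b t)) $$ (i,j) = yv b (x0 b t) j gchoose (t*b-1-i)"
      using ij by (simp add: Brev_def)
    also have "\<dots> = of_nat ((t*b-1-j) choose (t*b-1-i))"
      by (simp only: yv0[OF ij(2)] binomial_gbinomial)
    also have "\<dots> = 0" using ij by simp
    finally show "Brev (t*b) (yv b (x0 b t)) $$ (i,j) = 0" .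
  qed (simp add: Brev_def)
  also have "\<dots> = 1"
  proof -
    have "Brev (t*b) (yv b (x0 b t)) $$ (i,i) = 1" if i: "i < t*b" for i
    proof -
      have "Brev (t*b) (yv b (x0 b t)) $$ (i,i) = yv b (x0 b t) i gchoose (t*b-1-i)"
        using i by (simp add: Brev_def)
      also have "\<dots> = of_nat ((t*b-1-i) choose (t*b-1-i))"
        by (simp only: yv0[OF i] binomial_gbinomial)
      finally show ?thesis by simp
    qed
    then show ?thesis by (simp add: prod_list_diag_prod Brev_def)
  qed
  finally show ?thesis .
qed



definition Hk :: "nat \<Rightarrow> complex \<Rightarrow> complex" where
  "Hk b v = (\<Prod>k\<in>{-int b+1..int b - 1}. (v + of_int k) ^ nat (int b - \<bar>k\<bar>))"

lemma G_H: "G b u = (-1)^(b*b) * Hk b (-u)"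
proof -
  have "G b u = (\<Prod>a'<b. \<Prod>a<b. (-1) * (- u + of_int (int a' - int a)))"
    unfolding G_def
  proof (rule prod.cong[OF refl], rule prod.cong[OF refl])
    fix a' a assume a': "a' \<in> {..<b}" and a: "a \<in> {..<b}"
    have e1: "(of_nat (b - 1 - a') :: complex) = of_nat b - 1 - of_nat a'" using a' by (simp add: of_nat_diff)
    have e2: "(of_nat (b - 1 - a) :: complex) = of_nat b - 1 - of_nat a" using a by (simp add: of_nat_diff)
    show "u + of_nat (b - 1 - a') - of_nat (b - 1 - a) = (-1) * (- u + of_int (int a' - int a))"
      unfolding e1 e2 by simp
  qed
  also have "\<dots> = (\<Prod>a'<b. (-1)^b * (\<Prod>a<b. (- u + of_int (int a' - int a))))"
    by (simp only: prod.distrib prod_constant card_lessThan)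
  also have "\<dots> = ((-1)^b)^b * (\<Prod>a'<b. \<Prod>a<b. (- u + of_int (int a' - int a)))"
    by (simp only: prod.distrib prod_constant card_lessThan)
  also have "\<dots> = (-1)^(b*b) * Hk b (-u)"
    by (simp only: H_lemma Hk_def power_mult)
  finally show ?thesis .
qed

lemma PG_F: "PG b t x = (\<Prod>j<t. \<Prod>i<j. (-1)^(b*b)) * (\<Prod>j<t. \<Prod>i<j. Hk b (x i - x j))"
  unfolding PG_def G_H by (simp add: prod.distrib)

lemma rhs_F:
  fixes b t :: nat and x :: "nat \<Rightarrow> complex"
  shows "(\<Prod>j\<in>{..<t}. \<Prod>i\<in>{..<j}. \<Prod>k\<in>{-int b + 1..int b - 1}.
       ((x i - x j + of_int k) / of_int (int b * (int j - int i) + k)) ^ nat (int b - \<bar>k\<bar>))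
    = (\<Prod>j<t. \<Prod>i<j. Hk b (x i - x j)) / (\<Prod>j<t. \<Prod>i<j. Hk b (x0 b t i - x0 b t j))"
proof -
  have "(\<Prod>j\<in>{..<t}. \<Prod>i\<in>{..<j}. \<Prod>k\<in>{-int b + 1..int b - 1}.
       ((x i - x j + of_int k) / of_int (int b * (int j - int i) + k)) ^ nat (int b - \<bar>k\<bar>))
     = (\<Prod>j\<in>{..<t}. \<Prod>i\<in>{..<j}. \<Prod>k\<in>{-int b + 1..int b - 1}.
       (x i - x j + of_int k) ^ nat (int b - \<bar>k\<bar>) / (x0 b t i - x0 b t j + of_int k) ^ nat (int b - \<bar>k\<bar>))"
  proof (rule prod.cong[OF refl], rule prod.cong[OF refl], rule prod.cong[OF refl])
    fix j i k assume j: "j \<in> {..<t}" and i: "i \<in> {..<j}"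
    have "int (b * (t - 1 - i)) - int (b * (t - 1 - j)) = int b * (int j - int i)"
    proof -
      have h: "int (b*(t-1-m)) = int b * (int t - 1 - int m)" if "m < t" for m
      proof -
        have "int (t-1-m) = int t - 1 - int m" using that by simp
        then show ?thesis by (simp only: of_nat_mult)
      qed
      show ?thesis using i j h[of i] h[of j] by (simp add: algebra_simps)
    qed
    moreover have "(of_int (int (b * (t - 1 - i)) - int (b * (t - 1 - j)) + k) :: complex) =
        of_nat (b * (t - 1 - i)) - of_nat (b * (t - 1 - j)) + of_int k"
      by (simp only: of_int_add of_int_diff of_int_of_nat_eq)
    ultimately have "x0 b t i - x0 b t j + of_int k = of_int (int b * (int j - int i) + k)"
      unfolding x0_def by simp
    then show "((x i - x j + of_int k) / of_int (int b * (int j - int i) + k)) ^ nat (int b - \<bar>k\<bar>) =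
       (x i - x j + of_int k) ^ nat (int b - \<bar>k\<bar>) / (x0 b t i - x0 b t j + of_int k) ^ nat (int b - \<bar>k\<bar>)"
      by (simp add: power_divide)
  qed
  also have "\<dots> = (\<Prod>j<t. \<Prod>i<j. Hk b (x i - x j)) / (\<Prod>j<t. \<Prod>i<j. Hk b (x0 b t i - x0 b t j))"
    by (simp add: prod_dividef Hk_def)
  finally show ?thesis .
qed

theorem mainTheorem7:
  fixes b t :: nat and x :: "nat \<Rightarrow> complex"
  assumes "b > 0" and "t > 0"
  shows "det (matA b t x) =
    (\<Prod>j\<in>{..<t}. \<Prod>i\<in>{..<j}. \<Prod>k\<in>{-int b + 1..int b - 1}.
       ((x i - x j + of_int k) / of_int (int b * (int j - int i) + k)) ^ nat (int b - \<bar>k\<bar>))"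
proof -
  define F where "F y = (\<Prod>j<t. \<Prod>i<j. Hk b (y i - y j))" for y
  define c where "c = det (Jm (t*b)) / (\<Prod>m<t*b. fact m) * (Wb b ^ t * (\<Prod>j<t. \<Prod>i<j. (-1)^(b*b)))"
  have D: "det (matA b t y) = c * F y" for y
    unfolding det_A_Brev[OF assms] det_Brev Vp_yv[OF assms(1)] PG_F c_def F_def
    by (simp add: algebra_simps)
  have 1: "c * F (x0 b t) = 1"
    using D[of "x0 b t"] det_A_Brev[OF assms, of "x0 b t"] det_Brev_x0[OF assms] by simp
  then have nz: "F (x0 b t) \<noteq> 0" by auto
  have "det (matA b t x) = F x / F (x0 b t)"
    using D[of x] 1 nz by (simp add: field_simps)
  then show ?thesis using rhs_F[of x b t] by (simp add: F_def)
qed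


end
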